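(* Let $n \ge 1$, let $f \in \mathbb{C}^n$ be a unit vector ($\|f\|_2 = 1$), and let $H, H' \in \mathbb{C}^{n\times n}$ be Hermitian matrices. Then \[ W_1\big(\mu_f^{H}, \mu_f^{H'}\big) \le n\,\|H - H'\|_2 . \]
   Context: For a Hermitian matrix $H \in \mathbb{C}^{n\times n}$, let $\mathrm{spec}(H)$ be its set of distinct eigenvalues and, for $\lambda \in \mathrm{spec}(H)$, let $P_\lambda$ be the orthogonal projection onto the $\lambda$-eigenspace. For a unit vector $f\in\mathbb{C}^n$, the power spectrum of $f$ with respect to $H$ is the discrete probability measure on $\mathbb{R}$ \[ \mu_f^H = \sum_{\lambda \in \mathrm{spec}(H)} \langle f, P_\lambda f\rangle\, \delta_\lambda \] (equivalently $\sum_{i=1}^n |\langle \phi_i, f\rangle|^2 \delta_{\lambda_i}$ for any orthonormal eigenbasis $\phi_i$ with eigenvalues $\lambda_i$). $W_1$ denotes the 1-Wasserstein distance between probability measures on $\mathbb{R}$ (with cost $|s-t|$), and $\|\cdot\|_2$ is the operator (spectral) norm. *)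

theory Defs
  imports "HOL-Analysis.Analysis" "HOL-Probability.Probability"
begin

text \<open>Vectors in C^n are complex ^ 'n (n = CARD('n) >= 1); matrices are complex ^ 'n ^ 'n.\<close>

definition cinner :: "complex ^ 'n \<Rightarrow> complex ^ 'n \<Rightarrow> complex" where
  "cinner x y = (\<Sum>i\<in>UNIV. cnj (x $ i) * y $ i)"

definition adjoint_mat :: "complex ^ 'n ^ 'n \<Rightarrow> complex ^ 'n ^ 'n" where
  "adjoint_mat A = (\<chi> i j. cnj (A $ j $ i))"

definition hermitian_mat :: "complex ^ 'n ^ 'n \<Rightarrow> bool" where
  "hermitian_mat A \<longleftrightarrow> adjoint_mat A = A"

definition spec :: "complex ^ 'n ^ 'n \<Rightarrow> complex set" where
  "spec H = {l. \<exists>v. v \<noteq> 0 \<and> H *v v = l *s v}"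

definition eigenspace :: "complex ^ 'n ^ 'n \<Rightarrow> complex \<Rightarrow> (complex ^ 'n) set" where
  "eigenspace H l = {v. H *v v = l *s v}"

definition orth_proj :: "(complex ^ 'n) set \<Rightarrow> complex ^ 'n \<Rightarrow> complex ^ 'n" where
  "orth_proj E f = (THE p. p \<in> E \<and> (\<forall>v\<in>E. cinner v (f - p) = 0))"

definition opnorm2 :: "complex ^ 'n ^ 'n \<Rightarrow> real" where
  "opnorm2 A = onorm (\<lambda>x. A *v x)"

text \<open>Power spectrum of f w.r.t. H: the discrete probability measure on R with mass
  <f, P_l f> at each eigenvalue l (eigenvalues of a Hermitian matrix are real).\<close>
definition power_spectrum :: "complex ^ 'n ^ 'n \<Rightarrow> complex ^ 'n \<Rightarrow> real pmf" where
  "power_spectrum H f = embed_pmf (\<lambda>x::real.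
     if complex_of_real x \<in> spec H
     then Re (cinner f (orth_proj (eigenspace H (complex_of_real x)) f)) else 0)"

definition couplings :: "real pmf \<Rightarrow> real pmf \<Rightarrow> (real \<times> real) pmf set" where
  "couplings \<mu> \<nu> = {\<gamma>. map_pmf fst \<gamma> = \<mu> \<and> map_pmf snd \<gamma> = \<nu>}"

definition W1 :: "real pmf \<Rightarrow> real pmf \<Rightarrow> real" where
  "W1 \<mu> \<nu> = Inf ((\<lambda>\<gamma>. measure_pmf.expectation \<gamma> (\<lambda>(s, t). \<bar>s - t\<bar>)) ` couplings \<mu> \<nu>)"

end

theory Submission
  imports Defs
begin


lemma quad_neg_contra:
  fixes a Q :: real
  assumes "a > 0" and h: "\<And>t. 2 * t * a + t^2 * Q \<le> 0"
  shows False
proof -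
  define t where "t = a / (\<bar>Q\<bar> + 1)"
  have tpos: "t > 0" using assms by (simp add: t_def)
  have "t * \<bar>Q\<bar> < a"
  proof -
    have "t * \<bar>Q\<bar> = a * (\<bar>Q\<bar> / (\<bar>Q\<bar> + 1))" by (simp add: t_def)
    also have "\<dots> < a * 1" using assms by (intro mult_strict_left_mono) auto
    finally show ?thesis by simp
  qed
  then have "t * (t * \<bar>Q\<bar>) < t * a" using tpos by (intro mult_strict_left_mono)
  moreover have "t^2 * (- \<bar>Q\<bar>) \<le> t^2 * Q" by (rule mult_left_mono) auto
  ultimately have "2 * t * a + t^2 * Q > t * a" by (simp add: power2_eq_square algebra_simps)
  moreover have "t * a > 0" using tpos assms by simp
  ultimately show False using h[of t] by linarith
qed

lemma selfadj_eig:
  fixes T :: "'a::euclidean_space \<Rightarrow> 'a"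
  assumes lin: "linear T" and sa: "\<And>x y. x \<bullet> T y = T x \<bullet> y" and sub: "subspace W"
    and inv: "\<And>w. w \<in> W \<Longrightarrow> T w \<in> W" and w: "w \<in> W" "w \<noteq> 0"
  shows "\<exists>v\<in>W. v \<noteq> 0 \<and> (\<exists>c. T v = c *\<^sub>R v)"
proof -
  let ?K = "sphere 0 1 \<inter> W"
  have cK: "compact ?K" by (rule compact_Int_closed[OF compact_sphere closed_subspace[OF sub]])
  have "(1 / norm w) *\<^sub>R w \<in> ?K" using w sub by (auto simp: subspace_scale)
  then have ne: "?K \<noteq> {}" by blast
  have bl: "bounded_linear T" using lin by (simp add: linear_conv_bounded_linear)
  have ct: "continuous_on ?K (\<lambda>x. x \<bullet> T x)"
    by (intro continuous_intros linear_continuous_on bl)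
  obtain v0 where v0: "v0 \<in> ?K" "\<And>y. y \<in> ?K \<Longrightarrow> y \<bullet> T y \<le> v0 \<bullet> T v0"
    using continuous_attains_sup[OF cK ne ct] by blast
  define m where "m = v0 \<bullet> T v0"
  have v0W: "v0 \<in> W" and nv0: "norm v0 = 1" using v0(1) by auto
  have v0v0: "v0 \<bullet> v0 = 1" using nv0 by (simp add: norm_eq_1)
  have bound: "x \<bullet> T x \<le> m * (x \<bullet> x)" if xW: "x \<in> W" for x
  proof (cases "x = 0")
    case True then show ?thesis using linear_0[OF lin] by simp
  next
    case False
    define c where "c = 1 / norm x"
    have "c *\<^sub>R x \<in> ?K" using False xW sub by (auto simp: c_def subspace_scale)
    then have "(c *\<^sub>R x) \<bullet> T (c *\<^sub>R x) \<le> m" unfolding m_def by (rule v0(2))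
    moreover have "(c *\<^sub>R x) \<bullet> T (c *\<^sub>R x) = c^2 * (x \<bullet> T x)" by (simp add: linear_scale[OF lin] power2_eq_square)
    ultimately have "c^2 * (x \<bullet> T x) \<le> m" by simp
    then have "(x \<bullet> T x) \<le> m * (norm x)^2"
      using False by (simp add: c_def field_simps)
    then show ?thesis by (simp add: power2_norm_eq_inner)
  qed
  define u where "u = T v0 - m *\<^sub>R v0"
  have uW: "u \<in> W" unfolding u_def using inv[OF v0W] v0W sub by (simp add: subspace_diff subspace_scale)
  have uu: "u \<bullet> T v0 - m * (v0 \<bullet> u) = u \<bullet> u"
    by (simp add: u_def inner_diff_left inner_diff_right inner_commute right_diff_distrib)
  have key: "2 * t * (u \<bullet> u) + t^2 * (u \<bullet> T u - m * (u \<bullet> u)) \<le> 0" for t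
  proof -
    have yW: "v0 + t *\<^sub>R u \<in> W" using v0W uW sub by (simp add: subspace_add subspace_scale)
    have e1: "(v0 + t *\<^sub>R u) \<bullet> T (v0 + t *\<^sub>R u) = m + 2 * t * (u \<bullet> T v0) + t^2 * (u \<bullet> T u)"
    proof -
      have s: "v0 \<bullet> T u = u \<bullet> T v0" using sa[of v0 u] inner_commute[of "T v0" u] by simp
      have "(v0 + t *\<^sub>R u) \<bullet> T (v0 + t *\<^sub>R u) = v0 \<bullet> T v0 + t * (v0 \<bullet> T u) + t * (u \<bullet> T v0) + t * t * (u \<bullet> T u)"
        by (simp add: linear_add[OF lin] linear_scale[OF lin] inner_add_left inner_add_right distrib_left)
      then show ?thesis unfolding s m_def power2_eq_square by simp
    qed
    have e2: "(v0 + t *\<^sub>R u) \<bullet> (v0 + t *\<^sub>R u) = 1 + 2 * t * (v0 \<bullet> u) + t^2 * (u \<bullet> u)"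
    proof -
      have "(v0 + t *\<^sub>R u) \<bullet> (v0 + t *\<^sub>R u) = v0 \<bullet> v0 + t * (v0 \<bullet> u) + t * (u \<bullet> v0) + t * t * (u \<bullet> u)"
        by (simp add: inner_add_left inner_add_right distrib_left)
      then show ?thesis unfolding v0v0 power2_eq_square by (simp add: inner_commute)
    qed
    have "m + 2 * t * (u \<bullet> T v0) + t^2 * (u \<bullet> T u) \<le> m * (1 + 2 * t * (v0 \<bullet> u) + t^2 * (u \<bullet> u))"
      using bound[OF yW] e1 e2 by simp
    then have "2 * t * (u \<bullet> T v0 - m * (v0 \<bullet> u)) + t^2 * (u \<bullet> T u - m * (u \<bullet> u)) \<le> 0"
      by (simp add: algebra_simps)
    then show ?thesis using uu by simp
  qed
  have "u = 0"
  proof (rule ccontr)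
    assume "u \<noteq> 0"
    then have "u \<bullet> u > 0" by simp
    then show False using quad_neg_contra key by blast
  qed
  then have "T v0 = m *\<^sub>R v0" by (simp add: u_def)
  moreover have "v0 \<noteq> 0" using nv0 by auto
  ultimately show ?thesis using v0W by blast
qed



lemma cinner_Re: "Re (cinner x y) = x \<bullet> y"
  unfolding cinner_def inner_vec_def by (simp add: inner_complex_def)

lemma cinner_add_right: "cinner x (y + z) = cinner x y + cinner x z"
  unfolding cinner_def by (simp add: distrib_left sum.distrib)
lemma cinner_add_left: "cinner (x + y) z = cinner x z + cinner y z"
  unfolding cinner_def by (simp add: distrib_right sum.distrib)
lemma cinner_diff_right: "cinner x (y - z) = cinner x y - cinner x z"
  unfolding cinner_def by (simp add: right_diff_distrib sum_subtractf)
lemma cinner_diff_left: "cinner (x - y) z = cinner x z - cinner y z"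
  unfolding cinner_def by (simp add: left_diff_distrib sum_subtractf)
lemma cinner_scale_right: "cinner x (c *s y) = c * cinner x y"
  unfolding cinner_def by (simp add: sum_distrib_left algebra_simps)
lemma cinner_scale_left: "cinner (c *s x) y = cnj c * cinner x y"
  unfolding cinner_def by (simp add: sum_distrib_left algebra_simps)
lemma cinner_zero_right[simp]: "cinner x 0 = 0"
  unfolding cinner_def by simp
lemma cinner_zero_left[simp]: "cinner 0 x = 0"
  unfolding cinner_def by simp
lemma cinner_sum_right: "cinner x (\<Sum>i\<in>A. g i) = (\<Sum>i\<in>A. cinner x (g i))"
  by (induction A rule: infinite_finite_induct) (auto simp: cinner_add_right)
lemma cinner_sum_left: "cinner (\<Sum>i\<in>A. g i) x = (\<Sum>i\<in>A. cinner (g i) x)"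
  by (induction A rule: infinite_finite_induct) (auto simp: cinner_add_left)
lemma cinner_commute: "cinner y x = cnj (cinner x y)"
  unfolding cinner_def by (simp add: mult.commute)

lemma cinner_self: "cinner x x = complex_of_real ((norm x)^2)"
proof -
  have "(norm x)^2 = (\<Sum>i\<in>UNIV. (cmod (x $ i))^2)"
    unfolding norm_vec_def L2_set_def by (simp add: sum_nonneg)
  then have "complex_of_real ((norm x)^2) = (\<Sum>i\<in>UNIV. complex_of_real ((cmod (x $ i))^2))" by simp
  also have "\<dots> = (\<Sum>i\<in>UNIV. cnj (x $ i) * x $ i)"
    by (rule sum.cong[OF refl]) (metis complex_norm_square mult.commute of_real_power)
  finally show ?thesis unfolding cinner_def by simp
qed

lemma cinner_self_eq0: "cinner x x = 0 \<longleftrightarrow> x = 0"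
  by (simp add: cinner_self)

lemma norm_scale: "norm (c *s x) = cmod c * norm (x :: complex ^ 'n)"
proof -
  have "norm (c *s x) = L2_set (\<lambda>i. cmod c * cmod (x $ i)) UNIV"
    unfolding norm_vec_def by (simp add: norm_mult)
  also have "\<dots> = cmod c * norm x"
    unfolding norm_vec_def by (simp add: L2_set_right_distrib)
  finally show ?thesis .
qed

lemma cinner_cs: "cmod (cinner x y) \<le> norm x * norm y"
proof (cases "cinner x y = 0")
  case True then show ?thesis by simp
next
  case False
  define c where "c = cinner x y"
  define a where "a = c / complex_of_real (cmod c)"
  have ca: "cmod a = 1" using False by (simp add: a_def c_def norm_divide)
  have "cinner (a *s x) y = cnj a * c" by (simp add: cinner_scale_left c_def)
  also have "\<dots> = complex_of_real (cmod c)"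
    using False by (simp add: a_def c_def complex_norm_square[symmetric] power2_eq_square field_simps)
  finally have "cmod c = (a *s x) \<bullet> y" using cinner_Re[of "a *s x" y] by simp
  also have "\<dots> \<le> norm (a *s x) * norm y" by (rule norm_cauchy_schwarz)
  also have "\<dots> = norm x * norm y" by (simp add: norm_scale ca)
  finally show ?thesis by (simp add: c_def)
qed

lemma mv_add: "(H :: complex^'n^'n) *v (x + y) = H *v x + H *v y"
  by (simp add: matrix_vector_right_distrib)
lemma mv_scale: "(H :: complex^'n^'n) *v (c *s x) = c *s (H *v x)"
  by (simp add: vec_eq_iff matrix_vector_mult_def sum_distrib_left algebra_simps)
lemma mv_scaleR: "(H :: complex^'n^'n) *v (r *\<^sub>R x) = r *\<^sub>R (H *v x)"
  by (simp add: vec_eq_iff matrix_vector_mult_def scaleR_sum_right)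
lemma mv_linear: "linear (\<lambda>x. (H :: complex^'n^'n) *v x)"
  by (rule linearI) (simp_all add: mv_add mv_scaleR)
lemma mv_diff_mat: "((H :: complex^'n^'n) - H') *v x = H *v x - H' *v x"
  by (simp add: vec_eq_iff matrix_vector_mult_def sum_subtractf left_diff_distrib)

lemma cinner_adj: "cinner x (H *v y) = cinner (adjoint_mat H *v x) y"
proof -
  have "cinner x (H *v y) = (\<Sum>i\<in>UNIV. \<Sum>j\<in>UNIV. cnj (x $ i) * (H $ i $ j * y $ j))"
    unfolding cinner_def matrix_vector_mult_def by (simp add: sum_distrib_left)
  also have "\<dots> = (\<Sum>j\<in>UNIV. \<Sum>i\<in>UNIV. cnj (x $ i) * (H $ i $ j * y $ j))" by (rule sum.swap)
  also have "\<dots> = cinner (adjoint_mat H *v x) y"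
    unfolding cinner_def matrix_vector_mult_def adjoint_mat_def
    by (simp add: sum_distrib_right sum_distrib_left algebra_simps)
  finally show ?thesis .
qed

lemma herm_swap: "hermitian_mat H \<Longrightarrow> cinner x (H *v y) = cinner (H *v x) y"
  using cinner_adj[of x H y] by (simp add: hermitian_mat_def)

lemma herm_sa: "hermitian_mat H \<Longrightarrow> x \<bullet> (H *v y) = (H *v x) \<bullet> y"
  using herm_swap[of H x y] by (metis cinner_Re)

lemma scale_i_Re: "Re (cinner (\<i> *s v) z) = Im (cinner v z)"
  by (simp add: cinner_scale_left)



definition stepF :: "real set \<Rightarrow> (real \<Rightarrow> real) \<Rightarrow> real \<Rightarrow> real" where
  "stepF X m t = (\<Sum>x\<in>X. m x * indicator {x..} t)"

lemma stepF_meas[measurable]: "stepF X m \<in> borel_measurable borel"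
  unfolding stepF_def by measurable

definition Ic :: "real \<Rightarrow> real \<Rightarrow> (real \<Rightarrow> real) \<Rightarrow> real" where
  "Ic a b h = integral\<^sup>L lborel (\<lambda>t. indicator {a..b} t * h t)"

lemma int_box:
  fixes h :: "real \<Rightarrow> real"
  assumes "h \<in> borel_measurable borel" "\<And>t. \<bar>h t\<bar> \<le> B"
  shows "integrable lborel (\<lambda>t. indicator {a..b} t * h t)"
proof -
  have "integrable lborel (\<lambda>t. indicator {a..b} t *\<^sub>R h t)"
    by (rule integrableI_bounded_set_indicator[where B=B]) (use assms in \<open>auto simp: emeasure_lborel_Icc_eq\<close>)
  then show ?thesis by simp
qed

lemma stepF_bound: "finite X \<Longrightarrow> \<bar>stepF X m t\<bar> \<le> (\<Sum>x\<in>X. \<bar>m x\<bar>)"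
  unfolding stepF_def
  apply (rule order.trans[OF sum_abs])
  apply (rule sum_mono)
  by (auto simp: indicator_def abs_mult)

lemma int_stepdiff:
  assumes "finite X" "finite Y"
  shows "integrable lborel (\<lambda>t. indicator {a..b} t * \<bar>stepF X m t - stepF Y n t\<bar>)"
proof (rule int_box)
  show "(\<lambda>t. \<bar>stepF X m t - stepF Y n t\<bar>) \<in> borel_measurable borel" by measurable
  fix t show "\<bar>\<bar>stepF X m t - stepF Y n t\<bar>\<bar> \<le> (\<Sum>x\<in>X. \<bar>m x\<bar>) + (\<Sum>x\<in>Y. \<bar>n x\<bar>)"
    using stepF_bound[OF assms(1), of m t] stepF_bound[OF assms(2), of n t] by linarith
qed

lemma ind_eq: fixes x y t :: real shows "\<bar>indicator {x..} t - indicator {y..} t\<bar> = (indicator {min x y..<max x y} t :: real)"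
  by (cases "x \<le> y"; cases "x \<le> t"; cases "y \<le> t") (auto simp: indicator_def min_def max_def)

lemma int_inddiff:
  assumes "x \<in> {a..b}" "y \<in> {a..b}"
  shows "Ic a b (\<lambda>t. \<bar>indicator {x..} t - indicator {y..} t\<bar>) = \<bar>x - y\<bar>"
proof -
  have "(\<lambda>t. indicator {a..b} t * \<bar>indicator {x..} t - indicator {y..} t\<bar>) = (indicator {min x y..<max x y} :: real \<Rightarrow> real)"
    using assms by (auto simp: indicator_def fun_eq_iff)
  moreover have "integral\<^sup>L lborel (indicator {min x y..<max x y} :: real \<Rightarrow> real) = max x y - min x y"
    by (simp add: emeasure_lborel_Ico measure_def)
  ultimately show ?thesis unfolding Ic_def by simp
qed

lemma int_inddiff_integrable: fixes x y :: real shows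
  "integrable lborel (\<lambda>t. indicator {a..b} t * \<bar>indicator {x..} t - indicator {y..} t :: real\<bar>)"
proof -
  have "(\<lambda>t. \<bar>indicator {x..} t - indicator {y..} t :: real\<bar>) \<in> borel_measurable borel" by measurable
  moreover have "\<And>t. \<bar>\<bar>indicator {x..} t - indicator {y..} t :: real\<bar>\<bar> \<le> 1" by (auto simp: indicator_def)
  ultimately show ?thesis by (rule int_box)
qed

lemma stepF_zero:
  assumes "finite X" "\<And>x. x \<in> X \<Longrightarrow> m x \<noteq> 0 \<Longrightarrow> x0 \<le> x" "t < x0"
  shows "stepF X m t = 0"
  unfolding stepF_def
  by (rule sum.neutral) (use assms in \<open>force simp: indicator_def\<close>)

lemma stepF_ge:
  assumes "finite X" "\<And>x. 0 \<le> m x" "x0 \<in> X" "x0 \<le> t"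
  shows "m x0 \<le> stepF X m t"
proof -
  have "m x0 * indicator {x0..} t \<le> stepF X m t"
    unfolding stepF_def
    by (rule member_le_sum) (use assms in \<open>auto simp: indicator_def\<close>)
  then show ?thesis using assms by simp
qed

lemma stepF_upd:
  assumes "finite X" "x0 \<in> X"
  shows "stepF X (m(x0 := m x0 - d)) t = stepF X m t - d * indicator {x0..} t"
proof -
  have "stepF X (m(x0 := m x0 - d)) t = (m x0 - d) * indicator {x0..} t + (\<Sum>x\<in>X-{x0}. (m(x0 := m x0 - d)) x * indicator {x..} t)"
    unfolding stepF_def by (simp only: sum.remove[OF assms] fun_upd_same)
  also have "(\<Sum>x\<in>X-{x0}. (m(x0 := m x0 - d)) x * indicator {x..} t) = (\<Sum>x\<in>X-{x0}. m x * indicator {x..} t)"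
    by (rule sum.cong) auto
  also have "stepF X m t = m x0 * indicator {x0..} t + (\<Sum>x\<in>X-{x0}. m x * indicator {x..} t)"
    unfolding stepF_def by (simp only: sum.remove[OF assms])
  ultimately show ?thesis by (simp only: left_diff_distrib)
qed

lemma pointwise:
  assumes "finite X" "finite Y" "\<And>x. 0 \<le> m x" "\<And>y. 0 \<le> n y"
    "x0 \<in> X" "y0 \<in> Y" "\<And>x. x \<in> X \<Longrightarrow> m x \<noteq> 0 \<Longrightarrow> x0 \<le> x"
    "\<And>y. y \<in> Y \<Longrightarrow> n y \<noteq> 0 \<Longrightarrow> y0 \<le> y"
    "0 \<le> d" "d \<le> m x0" "d \<le> n y0"
  shows "\<bar>stepF X m t - stepF Y n t\<bar> = d * \<bar>indicator {x0..} t - indicator {y0..} t\<bar>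
     + \<bar>(stepF X m t - d * indicator {x0..} t) - (stepF Y n t - d * indicator {y0..} t)\<bar>"
proof (cases "t < x0")
  case True
  then have F: "stepF X m t = 0" using stepF_zero[of X m x0 t] assms by blast
  show ?thesis
  proof (cases "t < y0")
    case True
    then have "stepF Y n t = 0" using stepF_zero[of Y n y0 t] assms by blast
    with F True \<open>t < x0\<close> show ?thesis by (simp add: indicator_def)
  next
    case False
    then have "n y0 \<le> stepF Y n t" using stepF_ge[of Y n y0 t] assms by simp
    with F False \<open>t < x0\<close> assms show ?thesis by (simp add: indicator_def)
  qed
next
  case False
  then have F: "m x0 \<le> stepF X m t" using stepF_ge[of X m x0 t] assms by simp
  show ?thesis
  proof (cases "t < y0")
    case True
    then have "stepF Y n t = 0" using stepF_zero[of Y n y0 t] assms by blast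
    with F True \<open>\<not> t < x0\<close> assms show ?thesis by (simp add: indicator_def)
  next
    case False
    with \<open>\<not> t < x0\<close> show ?thesis by (simp add: indicator_def)
  qed
qed

lemma sum_upd:
  assumes "finite X" "x0 \<in> X"
  shows "sum (f(x0 := v)) X = sum f X - f x0 + (v::real)"
proof -
  have "sum (f(x0 := v)) X = v + sum (f(x0 := v)) (X - {x0})"
    by (simp only: sum.remove[OF assms] fun_upd_same)
  also have "sum (f(x0 := v)) (X - {x0}) = sum f (X - {x0})" by (rule sum.cong) auto
  also have "sum f X = f x0 + sum f (X - {x0})" by (simp only: sum.remove[OF assms])
  ultimately show ?thesis by simp
qed

lemma Ic_split:
  assumes "finite X" "finite Y" "\<And>x. 0 \<le> m x" "\<And>y. 0 \<le> n y"
    "x0 \<in> X" "y0 \<in> Y" "\<And>x. x \<in> X \<Longrightarrow> m x \<noteq> 0 \<Longrightarrow> x0 \<le> x"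
    "\<And>y. y \<in> Y \<Longrightarrow> n y \<noteq> 0 \<Longrightarrow> y0 \<le> y"
    "0 \<le> d" "d \<le> m x0" "d \<le> n y0" "x0 \<in> {a..b}" "y0 \<in> {a..b}"
  shows "Ic a b (\<lambda>t. \<bar>stepF X m t - stepF Y n t\<bar>) = d * \<bar>x0 - y0\<bar> +
     Ic a b (\<lambda>t. \<bar>stepF X (m(x0 := m x0 - d)) t - stepF Y (n(y0 := n y0 - d)) t\<bar>)"
proof -
  let ?e = "\<lambda>t. indicator {a..b} t * \<bar>indicator {x0..} t - indicator {y0..} t :: real\<bar>"
  let ?D = "\<lambda>t. indicator {a..b} t * \<bar>stepF X (m(x0 := m x0 - d)) t - stepF Y (n(y0 := n y0 - d)) t\<bar>"
  have eq: "(\<lambda>t. indicator {a..b} t * \<bar>stepF X m t - stepF Y n t\<bar>) = (\<lambda>t. d * ?e t + ?D t)"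
  proof
    fix t
    show "indicator {a..b} t * \<bar>stepF X m t - stepF Y n t\<bar> = d * ?e t + ?D t"
      unfolding stepF_upd[OF assms(1,5)] stepF_upd[OF assms(2,6)]
    proof -
      have pw: "\<bar>stepF X m t - stepF Y n t\<bar> = d * \<bar>indicator {x0..} t - indicator {y0..} t\<bar>
     + \<bar>(stepF X m t - d * indicator {x0..} t) - (stepF Y n t - d * indicator {y0..} t)\<bar>"
        by (rule pointwise) (use assms in auto)
      show "indicator {a..b} t * \<bar>stepF X m t - stepF Y n t\<bar> = d * (indicator {a..b} t * \<bar>indicator {x0..} t - indicator {y0..} t\<bar>) + indicator {a..b} t * \<bar>(stepF X m t - d * indicator {x0..} t) - (stepF Y n t - d * indicator {y0..} t)\<bar>"
        unfolding pw by (simp add: algebra_simps)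
    qed
  qed
  have i1: "integrable lborel (\<lambda>t. d * ?e t)" using int_inddiff_integrable by simp
  have i2: "integrable lborel ?D" by (rule int_stepdiff[OF assms(1,2)])
  have "Ic a b (\<lambda>t. \<bar>stepF X m t - stepF Y n t\<bar>) = integral\<^sup>L lborel (\<lambda>t. d * ?e t) + integral\<^sup>L lborel ?D"
    unfolding Ic_def eq by (rule Bochner_Integration.integral_add[OF i1 i2])
  also have "integral\<^sup>L lborel (\<lambda>t. d * ?e t) = d * \<bar>x0 - y0\<bar>"
    using int_inddiff[OF assms(12,13)] unfolding Ic_def by simp
  finally show ?thesis unfolding Ic_def .
qed

lemma Ic_nonneg: "(\<And>t. 0 \<le> h t) \<Longrightarrow> 0 \<le> Ic a b h"
  unfolding Ic_def by (rule Bochner_Integration.integral_nonneg) (simp add: indicator_def)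

lemma coupling_ind:
  fixes a b :: real and X Y :: "real set"
  assumes X: "finite X" and Y: "finite Y" and Xab: "X \<subseteq> {a..b}" and Yab: "Y \<subseteq> {a..b}"
  shows "(\<forall>x. 0 \<le> m x) \<Longrightarrow> (\<forall>y. 0 \<le> n y) \<Longrightarrow> sum m X = sum n Y \<Longrightarrow>
     \<exists>g. (\<forall>p. 0 \<le> g p) \<and> (\<forall>p. p \<notin> X \<times> Y \<longrightarrow> g p = 0) \<and>
         (\<forall>x\<in>X. (\<Sum>y\<in>Y. g (x,y)) = m x) \<and> (\<forall>y\<in>Y. (\<Sum>x\<in>X. g (x,y)) = n y) \<and>
         (\<Sum>p\<in>X\<times>Y. g p * \<bar>fst p - snd p\<bar>) \<le> Ic a b (\<lambda>t. \<bar>stepF X m t - stepF Y n t\<bar>)"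
proof (induction "card {x\<in>X. m x \<noteq> 0} + card {y\<in>Y. n y \<noteq> 0}" arbitrary: m n rule: less_induct)
  case less
  define S where "S = {x\<in>X. m x \<noteq> 0}"
  define T where "T = {y\<in>Y. n y \<noteq> 0}"
  have finS: "finite S" and finT: "finite T" using X Y by (auto simp: S_def T_def)
  show ?case
  proof (cases "S = {}")
    case True
    then have m0: "\<forall>x\<in>X. m x = 0" by (auto simp: S_def)
    then have "sum n Y = 0" using less.prems by simp
    then have n0: "\<forall>y\<in>Y. n y = 0" using sum_nonneg_eq_0_iff[OF Y] less.prems by auto
    show ?thesis
      by (rule exI[of _ "\<lambda>_. 0"]) (use m0 n0 in \<open>auto intro!: Ic_nonneg\<close>)
  next
    case False
    then obtain x1 where x1: "x1 \<in> S" by blast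
    have "0 < m x1" using x1 less.prems(1) by (auto simp: S_def order_le_neq_trans)
    also have "m x1 \<le> sum m X" by (rule member_le_sum) (use x1 less.prems(1) X in \<open>auto simp: S_def\<close>)
    finally have posX: "0 < sum m X" .
    have "T \<noteq> {}"
    proof
      assume "T = {}"
      then have "\<forall>y\<in>Y. n y = 0" by (auto simp: T_def)
      then have "sum n Y = 0" by simp
      with posX less.prems(3) show False by simp
    qed
    define x0 where "x0 = Min S"
    define y0 where "y0 = Min T"
    have x0S: "x0 \<in> S" unfolding x0_def using finS False by (rule Min_in)
    have y0T: "y0 \<in> T" unfolding y0_def using finT \<open>T \<noteq> {}\<close> by (rule Min_in)
    have x0X: "x0 \<in> X" and mx0: "0 < m x0" using x0S less.prems(1) by (auto simp: S_def order_le_neq_trans)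
    have y0Y: "y0 \<in> Y" and ny0: "0 < n y0" using y0T less.prems(2) by (auto simp: T_def order_le_neq_trans)
    have x0min: "\<And>x. x \<in> X \<Longrightarrow> m x \<noteq> 0 \<Longrightarrow> x0 \<le> x"
      unfolding x0_def using finS by (auto simp: S_def)
    have y0min: "\<And>y. y \<in> Y \<Longrightarrow> n y \<noteq> 0 \<Longrightarrow> y0 \<le> y"
      unfolding y0_def using finT by (auto simp: T_def)
    define d where "d = min (m x0) (n y0)"
    have d0: "0 < d" using mx0 ny0 by (simp add: d_def)
    define m' where "m' = m(x0 := m x0 - d)"
    define n' where "n' = n(y0 := n y0 - d)"
    have m'nn: "\<forall>x. 0 \<le> m' x" using less.prems(1) by (auto simp: m'_def d_def)
    have n'nn: "\<forall>y. 0 \<le> n' y" using less.prems(2) by (auto simp: n'_def d_def)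
    have sums: "sum m' X = sum n' Y"
      unfolding m'_def n'_def using sum_upd[OF X x0X] sum_upd[OF Y y0Y] less.prems(3) by simp
    have S'sub: "{x\<in>X. m' x \<noteq> 0} \<subseteq> S" using mx0 by (auto simp: m'_def S_def split: if_splits)
    have T'sub: "{y\<in>Y. n' y \<noteq> 0} \<subseteq> T" using ny0 by (auto simp: n'_def T_def split: if_splits)
    have c1: "card {x\<in>X. m' x \<noteq> 0} \<le> card S" by (rule card_mono[OF finS S'sub])
    have c2: "card {y\<in>Y. n' y \<noteq> 0} \<le> card T" by (rule card_mono[OF finT T'sub])
    have "card {x\<in>X. m' x \<noteq> 0} < card S \<or> card {y\<in>Y. n' y \<noteq> 0} < card T"
    proof (cases "d = m x0")
      case True
      have "m' x0 = 0" unfolding m'_def using True by simp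
      then have "x0 \<notin> {x\<in>X. m' x \<noteq> 0}" by simp
      then have "{x\<in>X. m' x \<noteq> 0} \<subset> S" using S'sub x0S by blast
      then show ?thesis using psubset_card_mono[OF finS] by blast
    next
      case False
      then have "d = n y0" by (simp add: d_def min_def split: if_splits)
      then have "n' y0 = 0" unfolding n'_def by simp
      then have "y0 \<notin> {y\<in>Y. n' y \<noteq> 0}" by simp
      then have "{y\<in>Y. n' y \<noteq> 0} \<subset> T" using T'sub y0T by blast
      then show ?thesis using psubset_card_mono[OF finT] by blast
    qed
    then have lt: "card {x\<in>X. m' x \<noteq> 0} + card {y\<in>Y. n' y \<noteq> 0} < card {x\<in>X. m x \<noteq> 0} + card {y\<in>Y. n y \<noteq> 0}"
      using c1 c2 unfolding S_def T_def by linarith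
    obtain g' where g': "\<forall>p. 0 \<le> g' p" "\<forall>p. p \<notin> X \<times> Y \<longrightarrow> g' p = 0"
         "\<forall>x\<in>X. (\<Sum>y\<in>Y. g' (x,y)) = m' x" "\<forall>y\<in>Y. (\<Sum>x\<in>X. g' (x,y)) = n' y"
         "(\<Sum>p\<in>X\<times>Y. g' p * \<bar>fst p - snd p\<bar>) \<le> Ic a b (\<lambda>t. \<bar>stepF X m' t - stepF Y n' t\<bar>)"
      using less.hyps[OF lt m'nn n'nn sums] by blast
    define g where "g = (\<lambda>p. g' p + (if p = (x0, y0) then d else 0))"
    have "\<forall>p. 0 \<le> g p" using g'(1) d0 by (simp add: g_def)
    moreover have "\<forall>p. p \<notin> X \<times> Y \<longrightarrow> g p = 0" using g'(2) x0X y0Y by (auto simp: g_def)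
    moreover have "\<forall>x\<in>X. (\<Sum>y\<in>Y. g (x,y)) = m x"
    proof
      fix x assume "x \<in> X"
      have "(\<Sum>y\<in>Y. g (x,y)) = (\<Sum>y\<in>Y. g' (x,y)) + (\<Sum>y\<in>Y. if x = x0 \<and> y = y0 then d else 0)"
        by (simp add: g_def sum.distrib)
      also have "(\<Sum>y\<in>Y. if x = x0 \<and> y = y0 then d else 0) = (if x = x0 then d else 0)"
        using Y y0Y by (cases "x = x0") auto
      finally show "(\<Sum>y\<in>Y. g (x,y)) = m x" using g'(3) \<open>x \<in> X\<close> by (simp add: m'_def)
    qed
    moreover have "\<forall>y\<in>Y. (\<Sum>x\<in>X. g (x,y)) = n y"
    proof
      fix y assume "y \<in> Y"
      have "(\<Sum>x\<in>X. g (x,y)) = (\<Sum>x\<in>X. g' (x,y)) + (\<Sum>x\<in>X. if x = x0 \<and> y = y0 then d else 0)"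
        by (simp add: g_def sum.distrib)
      also have "(\<Sum>x\<in>X. if x = x0 \<and> y = y0 then d else 0) = (if y = y0 then d else 0)"
        using X x0X by (cases "y = y0") auto
      finally show "(\<Sum>x\<in>X. g (x,y)) = n y" using g'(4) \<open>y \<in> Y\<close> by (simp add: n'_def)
    qed
    moreover have "(\<Sum>p\<in>X\<times>Y. g p * \<bar>fst p - snd p\<bar>) \<le> Ic a b (\<lambda>t. \<bar>stepF X m t - stepF Y n t\<bar>)"
    proof -
      have "(\<Sum>p\<in>X\<times>Y. g p * \<bar>fst p - snd p\<bar>) = (\<Sum>p\<in>X\<times>Y. g' p * \<bar>fst p - snd p\<bar>) + (\<Sum>p\<in>X\<times>Y. if p = (x0, y0) then d * \<bar>fst p - snd p\<bar> else 0)"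
        unfolding sum.distrib[symmetric] by (rule sum.cong) (auto simp: g_def algebra_simps)
      also have "(\<Sum>p\<in>X\<times>Y. if p = (x0, y0) then d * \<bar>fst p - snd p\<bar> else 0) = d * \<bar>x0 - y0\<bar>"
        using X Y x0X y0Y by (simp add: sum.delta)
      also have "Ic a b (\<lambda>t. \<bar>stepF X m t - stepF Y n t\<bar>) = d * \<bar>x0 - y0\<bar> + Ic a b (\<lambda>t. \<bar>stepF X m' t - stepF Y n' t\<bar>)"
        unfolding m'_def n'_def
        by (rule Ic_split) (use X Y less.prems x0X y0Y x0min y0min d0 Xab Yab in \<open>auto simp: d_def\<close>)
      ultimately show ?thesis using g'(5) by linarith
    qed
    ultimately show ?thesis by blast
  qed
qed

lemma Ic_bound:
  fixes X Y :: "real set"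
  assumes X: "finite X" and Y: "finite Y" and Xab: "X \<subseteq> {a..b}" and Yab: "Y \<subseteq> {a..b}"
    and row: "\<forall>x\<in>X. (\<Sum>y\<in>Y. q x y) = m x" and col: "\<forall>y\<in>Y. (\<Sum>x\<in>X. q x y) = n y"
  shows "Ic a b (\<lambda>t. \<bar>stepF X m t - stepF Y n t\<bar>) \<le> (\<Sum>x\<in>X. \<Sum>y\<in>Y. \<bar>q x y\<bar> * \<bar>x - y\<bar>)"
proof -
  let ?e = "\<lambda>x y t. \<bar>indicator {x..} t - indicator {y..} t :: real\<bar>"
  have pt: "\<bar>stepF X m t - stepF Y n t\<bar> \<le> (\<Sum>x\<in>X. \<Sum>y\<in>Y. \<bar>q x y\<bar> * ?e x y t)" for t
  proof -
    have "stepF X m t = (\<Sum>x\<in>X. \<Sum>y\<in>Y. q x y * indicator {x..} t)"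
      unfolding stepF_def by (rule sum.cong[OF refl]) (simp add: row sum_distrib_right[symmetric])
    moreover have "stepF Y n t = (\<Sum>x\<in>X. \<Sum>y\<in>Y. q x y * indicator {y..} t)"
      unfolding stepF_def by (subst sum.swap) (rule sum.cong[OF refl], simp add: col sum_distrib_right[symmetric])
    ultimately have "stepF X m t - stepF Y n t = (\<Sum>x\<in>X. \<Sum>y\<in>Y. q x y * (indicator {x..} t - indicator {y..} t))"
      by (simp add: sum_subtractf right_diff_distrib)
    also have "\<bar>\<dots>\<bar> \<le> (\<Sum>x\<in>X. \<bar>\<Sum>y\<in>Y. q x y * (indicator {x..} t - indicator {y..} t)\<bar>)"
      by (rule sum_abs)
    also have "\<dots> \<le> (\<Sum>x\<in>X. \<Sum>y\<in>Y. \<bar>q x y\<bar> * ?e x y t)"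
      by (rule sum_mono, rule order.trans[OF sum_abs], rule sum_mono) (simp add: abs_mult)
    finally show ?thesis .
  qed
  have ints: "integrable lborel (\<lambda>t. indicator {a..b} t * ?e x y t)" for x y
    by (rule int_inddiff_integrable)
  have "Ic a b (\<lambda>t. \<bar>stepF X m t - stepF Y n t\<bar>) \<le> Ic a b (\<lambda>t. \<Sum>x\<in>X. \<Sum>y\<in>Y. \<bar>q x y\<bar> * ?e x y t)"
    unfolding Ic_def
  proof (rule integral_mono)
    show "integrable lborel (\<lambda>t. indicator {a..b} t * \<bar>stepF X m t - stepF Y n t\<bar>)"
      by (rule int_stepdiff[OF X Y])
    show "integrable lborel (\<lambda>t. indicator {a..b} t * (\<Sum>x\<in>X. \<Sum>y\<in>Y. \<bar>q x y\<bar> * ?e x y t))"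
      unfolding sum_distrib_left using ints by (simp add: mult.left_commute)
    show "indicator {a..b} t * \<bar>stepF X m t - stepF Y n t\<bar> \<le> indicator {a..b} t * (\<Sum>x\<in>X. \<Sum>y\<in>Y. \<bar>q x y\<bar> * ?e x y t)" for t
      using pt[of t] by (simp add: indicator_def)
  qed
  also have "Ic a b (\<lambda>t. \<Sum>x\<in>X. \<Sum>y\<in>Y. \<bar>q x y\<bar> * ?e x y t) = (\<Sum>x\<in>X. \<Sum>y\<in>Y. \<bar>q x y\<bar> * Ic a b (?e x y))"
    unfolding Ic_def sum_distrib_left using ints
    by (simp add: mult.left_commute Bochner_Integration.integral_sum integrable_sum)
  also have "\<dots> = (\<Sum>x\<in>X. \<Sum>y\<in>Y. \<bar>q x y\<bar> * \<bar>x - y\<bar>)"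
    using Xab Yab by (intro sum.cong refl) (simp add: int_inddiff subset_iff)
  finally show ?thesis .
qed

lemma embed_finite:
  fixes g :: "'a \<Rightarrow> real"
  assumes nn: "\<And>p. 0 \<le> g p" and out: "\<And>p. p \<notin> A \<Longrightarrow> g p = 0" and A: "finite A" and s1: "sum g A = 1"
  shows "pmf (embed_pmf g) p = g p" "set_pmf (embed_pmf g) \<subseteq> A"
    "measure (measure_pmf (embed_pmf g)) B = sum g (B \<inter> A)"
proof -
  have "(\<integral>\<^sup>+ x. ennreal (g x) \<partial>count_space UNIV) = (\<Sum>x\<in>A. ennreal (g x))"
    by (rule nn_integral_count_space') (use A out in auto)
  also have "\<dots> = ennreal (sum g A)" by (rule sum_ennreal) (use nn in auto)
  finally have int1: "(\<integral>\<^sup>+ x. ennreal (g x) \<partial>count_space UNIV) = 1" using s1 by simp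
  show pm: "pmf (embed_pmf g) p = g p" for p by (rule pmf_embed_pmf[OF nn int1])
  show sub: "set_pmf (embed_pmf g) \<subseteq> A" by (metis out pm set_pmf_iff subsetI)
  have "measure (measure_pmf (embed_pmf g)) B = measure (measure_pmf (embed_pmf g)) (B \<inter> set_pmf (embed_pmf g))"
    by (simp add: measure_Int_set_pmf)
  also have "B \<inter> set_pmf (embed_pmf g) = (B \<inter> A) \<inter> set_pmf (embed_pmf g)" using sub by blast
  also have "measure (measure_pmf (embed_pmf g)) \<dots> = measure (measure_pmf (embed_pmf g)) (B \<inter> A)"
    by (simp add: measure_Int_set_pmf)
  also have "\<dots> = sum (pmf (embed_pmf g)) (B \<inter> A)" by (rule measure_measure_pmf_finite) (use A in auto)
  also have "\<dots> = sum g (B \<inter> A)" by (simp add: pm)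
  finally show "measure (measure_pmf (embed_pmf g)) B = sum g (B \<inter> A)" .
qed

lemma W1_bound:
  fixes \<mu> \<nu> :: "real pmf" and X Y :: "real set" and q :: "real \<Rightarrow> real \<Rightarrow> real"
  assumes X: "finite X" and Y: "finite Y" and sX: "set_pmf \<mu> \<subseteq> X" and sY: "set_pmf \<nu> \<subseteq> Y"
    and row: "\<forall>x\<in>X. (\<Sum>y\<in>Y. q x y) = pmf \<mu> x" and col: "\<forall>y\<in>Y. (\<Sum>x\<in>X. q x y) = pmf \<nu> y"
  shows "W1 \<mu> \<nu> \<le> (\<Sum>x\<in>X. \<Sum>y\<in>Y. \<bar>q x y\<bar> * \<bar>x - y\<bar>)"
proof -
  have s1: "sum (pmf \<mu>) X = 1" by (rule sum_pmf_eq_1[OF X sX])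
  have s2: "sum (pmf \<nu>) Y = 1" by (rule sum_pmf_eq_1[OF Y sY])
  have "X \<noteq> {}" using s1 by auto
  define a where "a = Min (X \<union> Y)"
  define b where "b = Max (X \<union> Y)"
  have Xab: "X \<subseteq> {a..b}" and Yab: "Y \<subseteq> {a..b}" using X Y by (auto simp: a_def b_def)
  obtain g where g: "\<forall>p. 0 \<le> g p" "\<forall>p. p \<notin> X \<times> Y \<longrightarrow> g p = 0"
      "\<forall>x\<in>X. (\<Sum>y\<in>Y. g (x,y)) = pmf \<mu> x" "\<forall>y\<in>Y. (\<Sum>x\<in>X. g (x,y)) = pmf \<nu> y"
      "(\<Sum>p\<in>X\<times>Y. g p * \<bar>fst p - snd p\<bar>) \<le> Ic a b (\<lambda>t. \<bar>stepF X (pmf \<mu>) t - stepF Y (pmf \<nu>) t\<bar>)"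
    using coupling_ind[OF X Y Xab Yab, of "pmf \<mu>" "pmf \<nu>"] s1 s2 by auto
  have "sum g (X \<times> Y) = (\<Sum>x\<in>X. \<Sum>y\<in>Y. g (x,y))" by (simp add: sum.cartesian_product)
  also have "\<dots> = sum (pmf \<mu>) X" using g(3) by simp
  finally have gsum: "sum g (X \<times> Y) = 1" using s1 by simp
  have XY: "finite (X \<times> Y)" using X Y by simp
  note E = embed_finite[of g "X \<times> Y", OF _ _ XY gsum]
  have pmE: "pmf (embed_pmf g) p = g p" for p using E(1) g by auto
  have setE: "set_pmf (embed_pmf g) \<subseteq> X \<times> Y" using E(2) g by auto
  have msE: "measure (measure_pmf (embed_pmf g)) B = sum g (B \<inter> (X \<times> Y))" for B using E(3) g by auto
  have m1: "map_pmf fst (embed_pmf g) = \<mu>"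
  proof (rule pmf_eqI)
    fix x
    have "pmf (map_pmf fst (embed_pmf g)) x = sum g (fst -` {x} \<inter> (X \<times> Y))" by (simp add: pmf_map msE)
    also have "\<dots> = pmf \<mu> x"
    proof (cases "x \<in> X")
      case True
      have "fst -` {x} \<inter> (X \<times> Y) = Pair x ` Y" using True by auto
      then show ?thesis using True g(3) by (simp add: sum.reindex inj_on_def)
    next
      case False
      then have "fst -` {x} \<inter> (X \<times> Y) = {}" by auto
      moreover have "pmf \<mu> x = 0" using False sX by (auto simp: set_pmf_iff)
      ultimately show ?thesis by simp
    qed
    finally show "pmf (map_pmf fst (embed_pmf g)) x = pmf \<mu> x" .
  qed
  have m2: "map_pmf snd (embed_pmf g) = \<nu>"
  proof (rule pmf_eqI)
    fix y
    have "pmf (map_pmf snd (embed_pmf g)) y = sum g (snd -` {y} \<inter> (X \<times> Y))" by (simp add: pmf_map msE)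
    also have "\<dots> = pmf \<nu> y"
    proof (cases "y \<in> Y")
      case True
      have "snd -` {y} \<inter> (X \<times> Y) = (\<lambda>x. (x, y)) ` X" using True by auto
      then show ?thesis using True g(4) by (simp add: sum.reindex inj_on_def)
    next
      case False
      then have "snd -` {y} \<inter> (X \<times> Y) = {}" by auto
      moreover have "pmf \<nu> y = 0" using False sY by (auto simp: set_pmf_iff)
      ultimately show ?thesis by simp
    qed
    finally show "pmf (map_pmf snd (embed_pmf g)) y = pmf \<nu> y" .
  qed
  have cpl: "embed_pmf g \<in> couplings \<mu> \<nu>" using m1 m2 by (simp add: couplings_def)
  have exp: "measure_pmf.expectation (embed_pmf g) (\<lambda>(s, t). \<bar>s - t\<bar>) = (\<Sum>p\<in>X\<times>Y. g p * \<bar>fst p - snd p\<bar>)"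
    by (subst integral_measure_pmf_real[OF XY]) (use setE in \<open>auto simp: pmE split_beta mult.commute\<close>)
  have bdd: "bdd_below ((\<lambda>\<gamma>. measure_pmf.expectation \<gamma> (\<lambda>(s, t). \<bar>s - t\<bar>)) ` couplings \<mu> \<nu>)"
    by (rule bdd_belowI[where m=0]) (auto intro!: Bochner_Integration.integral_nonneg)
  have "W1 \<mu> \<nu> \<le> measure_pmf.expectation (embed_pmf g) (\<lambda>(s, t). \<bar>s - t\<bar>)"
    unfolding W1_def by (rule cInf_lower[OF imageI[OF cpl] bdd])
  also have "\<dots> \<le> Ic a b (\<lambda>t. \<bar>stepF X (pmf \<mu>) t - stepF Y (pmf \<nu>) t\<bar>)" using exp g(5) by simp
  also have "\<dots> \<le> (\<Sum>x\<in>X. \<Sum>y\<in>Y. \<bar>q x y\<bar> * \<bar>x - y\<bar>)"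
    by (rule Ic_bound[OF X Y Xab Yab row col])
  finally show ?thesis .
qed



lemma eig_real:
  assumes "hermitian_mat H" "l \<in> spec H" shows "cnj l = l"
proof -
  obtain v where v: "v \<noteq> 0" "H *v v = l *s v" using assms(2) by (auto simp: spec_def)
  have "cinner v (H *v v) = cinner (H *v v) v" by (rule herm_swap[OF assms(1)])
  then have "l * cinner v v = cnj l * cinner v v" using v(2) by (simp add: cinner_scale_left cinner_scale_right)
  moreover have "cinner v v \<noteq> 0" using v(1) by (simp add: cinner_self_eq0)
  ultimately show ?thesis by simp
qed

lemma eig_orth:
  assumes "hermitian_mat H" "v \<in> eigenspace H l" "w \<in> eigenspace H m" "l \<noteq> m"
  shows "cinner v w = 0"
proof (cases "v = 0")
  case True then show ?thesis by simp
next
  case False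
  then have "l \<in> spec H" using assms(2) by (auto simp: spec_def eigenspace_def)
  then have lr: "cnj l = l" by (rule eig_real[OF assms(1)])
  have "cinner v (H *v w) = cinner (H *v v) w" by (rule herm_swap[OF assms(1)])
  then have "m * cinner v w = l * cinner v w"
    using assms(2,3) lr by (simp add: eigenspace_def cinner_scale_left cinner_scale_right)
  then show ?thesis using assms(4) by simp
qed

lemma eigenspace_subspace: "subspace (eigenspace (H :: complex^'n^'n) l)"
  unfolding subspace_def eigenspace_def
  by (auto simp: mv_add mv_scaleR vec_eq_iff algebra_simps mult_scaleR_right)

lemma eigenspace_scale: "v \<in> eigenspace H l \<Longrightarrow> c *s v \<in> eigenspace H l"
  unfolding eigenspace_def by (auto simp: mv_scale vec_eq_iff algebra_simps)

lemma proj_ex1: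
  fixes E :: "(complex^'n) set"
  assumes sub: "subspace E" and sc: "\<And>v c. v \<in> E \<Longrightarrow> c *s v \<in> E"
  shows "\<exists>!p. p \<in> E \<and> (\<forall>v\<in>E. cinner v (f - p) = 0)"
proof -
  obtain y z where yz: "y \<in> span E" "\<And>w. w \<in> span E \<Longrightarrow> orthogonal z w" "f = y + z"
    using orthogonal_subspace_decomp_exists by blast
  have spE: "span E = E" using sub by (simp add: span_eq_iff)
  have ex: "y \<in> E \<and> (\<forall>v\<in>E. cinner v (f - y) = 0)"
  proof (intro conjI ballI)
    show "y \<in> E" using yz(1) spE by simp
    fix v assume v: "v \<in> E"
    have "f - y = z" using yz(3) by simp
    have r: "Re (cinner v z) = 0" using yz(2)[of v] v spE by (simp add: cinner_Re orthogonal_def inner_commute)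
    have "Re (cinner (\<i> *s v) z) = 0" using yz(2)[of "\<i> *s v"] sc[OF v] spE by (simp add: cinner_Re orthogonal_def inner_commute)
    then have i: "Im (cinner v z) = 0" by (simp add: scale_i_Re)
    show "cinner v (f - y) = 0" using r i \<open>f - y = z\<close> by (simp add: complex_eq_iff)
  qed
  moreover have "p = y" if p: "p \<in> E \<and> (\<forall>v\<in>E. cinner v (f - p) = 0)" for p
  proof -
    have d: "p - y \<in> E" using p ex sub by (simp add: subspace_diff)
    have "cinner (p - y) (f - y) - cinner (p - y) (f - p) = 0" using p ex d by simp
    then have "cinner (p - y) (p - y) = 0" by (simp add: cinner_diff_right[symmetric] algebra_simps)
    then show ?thesis by (simp add: cinner_self_eq0)
  qed
  ultimately show ?thesis by blast
qed

lemma proj_props: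
  fixes E :: "(complex^'n) set"
  assumes "subspace E" "\<And>v c. v \<in> E \<Longrightarrow> c *s v \<in> E"
  shows "orth_proj E f \<in> E" "\<And>v. v \<in> E \<Longrightarrow> cinner v (f - orth_proj E f) = 0"
  using theI'[OF proj_ex1[OF assms, of f]] unfolding orth_proj_def by auto

definition Pj :: "complex^'n^'n \<Rightarrow> complex \<Rightarrow> complex^'n \<Rightarrow> complex^'n" where
  "Pj H l f = orth_proj (eigenspace H l) f"

lemma Pj_in: "Pj H l f \<in> eigenspace H l"
  unfolding Pj_def by (rule proj_props(1)[OF eigenspace_subspace eigenspace_scale])

lemma Pj_orth: "v \<in> eigenspace H l \<Longrightarrow> cinner v (f - Pj H l f) = 0"
  unfolding Pj_def by (rule proj_props(2)[OF eigenspace_subspace eigenspace_scale])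


lemma orth_card:
  fixes S :: "(complex^'n) set"
  assumes nz: "\<And>v. v \<in> S \<Longrightarrow> v \<noteq> 0"
    and orth: "\<And>v w. v \<in> S \<Longrightarrow> w \<in> S \<Longrightarrow> v \<noteq> w \<Longrightarrow> cinner v w = 0"
  shows "finite S \<and> card S \<le> CARD('n)"
proof -
  let ?I = "(\<lambda>v. \<i> *s v) ` S"
  let ?B = "S \<union> ?I"
  have ii: "cinner (\<i> *s v) (\<i> *s w) = cinner v w" for v w :: "complex^'n"
    by (simp add: cinner_scale_left cinner_scale_right)
  have vi: "cinner v (\<i> *s w) = \<i> * cinner v w" for v w :: "complex^'n"
    by (simp add: cinner_scale_right)
  have iv: "cinner (\<i> *s v) w = - \<i> * cinner v w" for v w :: "complex^'n"
    by (simp add: cinner_scale_left)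
  have selfre: "Re (\<i> * cinner v v) = 0" for v :: "complex^'n"
    by (simp add: cinner_self)
  have selfre2: "Re (- \<i> * cinner v v) = 0" for v :: "complex^'n"
    by (simp add: cinner_self)
  have po: "pairwise orthogonal ?B"
    unfolding pairwise_def orthogonal_def cinner_Re[symmetric]
  proof (intro ballI impI)
    fix x y assume x: "x \<in> ?B" and y: "y \<in> ?B" and xy: "x \<noteq> y"
    show "Re (cinner x y) = 0"
    proof (cases "x \<in> S")
      case xS: True
      show ?thesis
      proof (cases "y \<in> S")
        case True then show ?thesis using orth xS xy by simp
      next
        case False
        then obtain w where w: "w \<in> S" "y = \<i> *s w" using y by auto
        show ?thesis
        proof (cases "x = w")
          case True then show ?thesis using w vi selfre by simp
        next
          case False then show ?thesis using w vi orth xS by simp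
        qed
      qed
    next
      case False
      then obtain v where v: "v \<in> S" "x = \<i> *s v" using x by auto
      show ?thesis
      proof (cases "y \<in> S")
        case True
        show ?thesis
        proof (cases "v = y")
          case True then show ?thesis using v iv selfre2 by simp
        next
          case False then show ?thesis using v iv orth True by simp
        qed
      next
        case False
        then obtain w where w: "w \<in> S" "y = \<i> *s w" using y by auto
        then have "v \<noteq> w" using v xy by auto
        then show ?thesis using v w ii orth by simp
      qed
    qed
  qed
  have z: "0 \<notin> ?B"
  proof
    assume "0 \<in> ?B"
    then consider "0 \<in> S" | v where "v \<in> S" "\<i> *s v = 0" by auto
    then show False
    proof cases
      case 1 then show False using nz by blast
    next
      case 2 then have "v = 0" by (simp add: vec_eq_iff)
      then show False using nz 2 by blast
    qed
  qed
  have ind: "independent ?B" by (rule pairwise_orthogonal_independent[OF po z])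
  have bnd: "finite ?B \<and> card ?B \<le> DIM(complex^'n)" by (rule independent_bound[OF ind])
  then have finS: "finite S" by simp
  have inj: "inj_on (\<lambda>v. \<i> *s v) S"
    by (rule inj_onI) (simp add: vec_eq_iff)
  have disj: "S \<inter> ?I = {}"
  proof (rule ccontr)
    assume "S \<inter> ?I \<noteq> {}"
    then obtain v w where vw: "v \<in> S" "w \<in> S" "v = \<i> *s w" by auto
    have "cinner w v = \<i> * cinner w w" using vw(3) vi by simp
    moreover have "cinner w w \<noteq> 0" using nz[OF vw(2)] by (simp add: cinner_self_eq0)
    ultimately have "cinner w v \<noteq> 0" by simp
    then have "w = v" using orth vw(1,2) by blast
    then have "v = \<i> *s v" using vw(3) by simp
    then have "cinner v v = \<i> * cinner v v" using vi[of v v] by simp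
    then have "cinner v v = 0" by (metis complex_i_not_one mult_cancel_right1)
    then show False using nz[OF vw(1)] by (simp add: cinner_self_eq0)
  qed
  have "card ?B = card S + card ?I" using finS disj by (simp add: card_Un_disjoint)
  also have "card ?I = card S" by (rule card_image[OF inj])
  finally have "2 * card S \<le> CARD('n) * 2" using bnd by (simp add: DIM_cart)
  then show ?thesis using finS by simp
qed

definition evec :: "complex^'n^'n \<Rightarrow> complex \<Rightarrow> complex^'n" where
  "evec H l = (SOME v. v \<noteq> 0 \<and> H *v v = l *s v)"

lemma evec: "l \<in> spec H \<Longrightarrow> evec H l \<noteq> 0 \<and> H *v evec H l = l *s evec H l"
  unfolding evec_def spec_def by (rule someI_ex) auto

lemma spec_fin_card:
  assumes herm: "hermitian_mat (H :: complex^'n^'n)"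
  shows "finite (spec H) \<and> card (spec H) \<le> CARD('n)"
proof -
  have inj: "inj_on (evec H) (spec H)"
  proof (rule inj_onI)
    fix l m assume l: "l \<in> spec H" and m: "m \<in> spec H" and e: "evec H l = evec H m"
    have "l *s evec H l = m *s evec H l" using evec[OF l] evec[OF m] e by metis
    then have "(l - m) *s evec H l = 0" by (simp add: vec_eq_iff algebra_simps)
    then show "l = m" using evec[OF l] by (auto simp: vec_eq_iff)
  qed
  have "finite (evec H ` spec H) \<and> card (evec H ` spec H) \<le> CARD('n)"
  proof (rule orth_card)
    show "\<And>v. v \<in> evec H ` spec H \<Longrightarrow> v \<noteq> 0" using evec by auto
    fix v w assume "v \<in> evec H ` spec H" "w \<in> evec H ` spec H" "v \<noteq> w"
    then obtain l m where lm: "l \<in> spec H" "m \<in> spec H" "v = evec H l" "w = evec H m" "l \<noteq> m" by auto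
    show "cinner v w = 0"
      by (rule eig_orth[OF herm _ _ lm(5)]) (use lm evec in \<open>auto simp: eigenspace_def\<close>)
  qed
  then show ?thesis using inj by (simp add: card_image finite_image_iff)
qed

lemma decomp:
  assumes herm: "hermitian_mat (H :: complex^'n^'n)"
  shows "(\<Sum>l\<in>spec H. Pj H l f) = f"
proof -
  have fin: "finite (spec H)" using spec_fin_card[OF herm] by simp
  define W where "W = {w. \<forall>l\<in>spec H. \<forall>v\<in>eigenspace H l. cinner v w = 0}"
  define g where "g = f - (\<Sum>l\<in>spec H. Pj H l f)"
  have gW: "g \<in> W" unfolding W_def
  proof (intro CollectI ballI)
    fix l0 v assume l0: "l0 \<in> spec H" and v: "v \<in> eigenspace H l0"
    have "cinner v (\<Sum>l\<in>spec H. Pj H l f) = (\<Sum>l\<in>spec H. cinner v (Pj H l f))" by (rule cinner_sum_right)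
    also have "\<dots> = cinner v (Pj H l0 f) + (\<Sum>l\<in>spec H - {l0}. cinner v (Pj H l f))"
      by (rule sum.remove[OF fin l0])
    also have "(\<Sum>l\<in>spec H - {l0}. cinner v (Pj H l f)) = 0"
    proof (intro sum.neutral ballI)
      fix m assume "m \<in> spec H - {l0}"
      then have "l0 \<noteq> m" by auto
      then show "cinner v (Pj H m f) = 0" by (rule eig_orth[OF herm v Pj_in])
    qed
    finally have "cinner v (\<Sum>l\<in>spec H. Pj H l f) = cinner v (Pj H l0 f)" by simp
    then show "cinner v g = 0" unfolding g_def
      using Pj_orth[OF v, of f] by (simp add: cinner_diff_right)
  qed
  have sR: "r *\<^sub>R x = complex_of_real r *s x" for r and x :: "complex^'n"
    by (simp add: vec_eq_iff) (simp add: scaleR_conv_of_real)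
  have subW: "subspace W" unfolding subspace_def W_def
    by (auto simp: cinner_add_right sR cinner_scale_right)
  have invW: "H *v w \<in> W" if "w \<in> W" for w
    unfolding W_def
  proof (intro CollectI ballI)
    fix l v assume l: "l \<in> spec H" and v: "v \<in> eigenspace H l"
    have "cinner v (H *v w) = cinner (H *v v) w" by (rule herm_swap[OF herm])
    also have "\<dots> = cnj l * cinner v w" using v by (simp add: eigenspace_def cinner_scale_left)
    also have "cinner v w = 0" using that l v by (auto simp: W_def)
    finally show "cinner v (H *v w) = 0" by simp
  qed
  have "g = 0"
  proof (rule ccontr)
    assume "g \<noteq> 0"
    then obtain v c where v: "v \<in> W" "v \<noteq> 0" "H *v v = c *\<^sub>R v"
      using selfadj_eig[OF mv_linear herm_sa[OF herm] subW invW gW] by blast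
    then have ev: "v \<in> eigenspace H (complex_of_real c)" by (simp add: eigenspace_def sR)
    then have "complex_of_real c \<in> spec H" using v(2) by (auto simp: spec_def eigenspace_def)
    then have "cinner v v = 0" using v(1) ev by (auto simp: W_def)
    then show False using v(2) by (simp add: cinner_self_eq0)
  qed
  then show ?thesis by (simp add: g_def)
qed



lemma Pj_self: "cinner f (Pj H l f) = complex_of_real ((norm (Pj H l f))^2)"
proof -
  have "cinner (Pj H l f) (f - Pj H l f) = 0" by (rule Pj_orth[OF Pj_in])
  then have "cinner (f - Pj H l f) (Pj H l f) = 0" by (metis cinner_commute complex_cnj_zero)
  then have "cinner f (Pj H l f) = cinner (Pj H l f) (Pj H l f)" by (simp add: cinner_diff_left)
  then show ?thesis by (simp add: cinner_self)
qed

lemma spec_of_real: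
  assumes "hermitian_mat H" "l \<in> spec H" shows "complex_of_real (Re l) = l"
  using eig_real[OF assms] by (metis Reals_cnj_iff complex_is_Real_iff of_real_Re)

lemma reindexX:
  fixes H :: "complex^'n^'n"
  assumes herm: "hermitian_mat H"
  shows "(\<Sum>x\<in>complex_of_real -` spec H. g (complex_of_real x)) = (\<Sum>l\<in>spec H. g l)"
    "finite (complex_of_real -` spec H)" "card (complex_of_real -` spec H) \<le> CARD('n)"
proof -
  have im: "complex_of_real ` (complex_of_real -` spec H) = spec H"
    using spec_of_real[OF herm] by (auto simp: image_iff) (metis vimageI2)
  have inj: "inj_on complex_of_real (complex_of_real -` spec H)" by (simp add: inj_on_def)
  show "(\<Sum>x\<in>complex_of_real -` spec H. g (complex_of_real x)) = (\<Sum>l\<in>spec H. g l)"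
    using sum.reindex[OF inj, of g] im by simp
  have fc: "finite (spec H) \<and> card (spec H) \<le> CARD('n)" by (rule spec_fin_card[OF herm])
  show "finite (complex_of_real -` spec H)"
    using fc finite_vimageI[of "spec H" complex_of_real] by (simp add: inj_on_def)
  show "card (complex_of_real -` spec H) \<le> CARD('n)"
    using fc card_image[OF inj] im by simp
qed

lemma ps_pmf:
  assumes herm: "hermitian_mat (H :: complex^'n^'n)" and nf: "norm f = 1"
  shows "pmf (power_spectrum H f) x = (if x \<in> complex_of_real -` spec H then (norm (Pj H (complex_of_real x) f))^2 else 0)"
    "set_pmf (power_spectrum H f) \<subseteq> complex_of_real -` spec H"
    "(\<Sum>x\<in>complex_of_real -` spec H. (norm (Pj H (complex_of_real x) f))^2) = 1"
proof -
  let ?X = "complex_of_real -` spec H"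
  define w where "w = (\<lambda>x::real. if complex_of_real x \<in> spec H
     then Re (cinner f (orth_proj (eigenspace H (complex_of_real x)) f)) else 0)"
  have w: "w x = (if x \<in> ?X then (norm (Pj H (complex_of_real x) f))^2 else 0)" for x
    by (simp add: w_def Pj_def[symmetric] Pj_self)
  have "(\<Sum>x\<in>?X. (norm (Pj H (complex_of_real x) f))^2) = (\<Sum>l\<in>spec H. (norm (Pj H l f))^2)"
    by (rule reindexX(1)[OF herm])
  also have "\<dots> = Re (\<Sum>l\<in>spec H. cinner f (Pj H l f))" by (simp add: Pj_self)
  also have "\<dots> = Re (cinner f f)" by (simp add: cinner_sum_right[symmetric] decomp[OF herm])
  also have "\<dots> = 1" using nf by (simp add: cinner_self)
  finally show s1: "(\<Sum>x\<in>?X. (norm (Pj H (complex_of_real x) f))^2) = 1" .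
  have sw: "sum w ?X = 1" using s1 by (simp add: w)
  note E = embed_finite[of w ?X, OF _ _ reindexX(2)[OF herm] sw]
  have ps: "power_spectrum H f = embed_pmf w" unfolding power_spectrum_def w_def ..
  show "pmf (power_spectrum H f) x = (if x \<in> ?X then (norm (Pj H (complex_of_real x) f))^2 else 0)"
    unfolding ps using E(1) w by simp
  show "set_pmf (power_spectrum H f) \<subseteq> ?X" unfolding ps using E(2) w by simp
qed


lemma sum_norm_bound:
  fixes H :: "complex^'n^'n"
  assumes herm: "hermitian_mat H" and nf: "norm f = 1"
  shows "(\<Sum>x\<in>complex_of_real -` spec H. norm (Pj H (complex_of_real x) f))^2 \<le> real CARD('n)"
proof -
  let ?X = "complex_of_real -` spec H"
  have "(\<Sum>x\<in>?X. norm (Pj H (complex_of_real x) f))^2 \<le> (\<Sum>x\<in>?X. (norm (Pj H (complex_of_real x) f))^2) * real (card ?X)"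
    by (rule sum_squared_le_sum_of_squares)
  also have "\<dots> = real (card ?X)" using ps_pmf(3)[OF herm nf] by simp
  also have "\<dots> \<le> real CARD('n)" using reindexX(3)[OF herm] by simp
  finally show ?thesis .
qed

theorem theorem3p1:
  fixes f :: "complex ^ 'n" and H H' :: "complex ^ 'n ^ 'n"
  assumes "norm f = 1"
    and "hermitian_mat H" and "hermitian_mat H'"
  shows "W1 (power_spectrum H f) (power_spectrum H' f) \<le> real CARD('n) * opnorm2 (H - H')"
proof -
  note nf = assms(1) and herm = assms(2) and herm' = assms(3)
  define X where "X = complex_of_real -` spec H"
  define Y where "Y = complex_of_real -` spec H'"
  define P where "P = (\<lambda>x::real. Pj H (complex_of_real x) f)"
  define P' where "P' = (\<lambda>y::real. Pj H' (complex_of_real y) f)"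
  define q where "q = (\<lambda>x y. Re (cinner (P x) (P' y)))"
  define \<epsilon> where "\<epsilon> = opnorm2 (H - H')"
  have finX: "finite X" unfolding X_def by (rule reindexX(2)[OF herm])
  have finY: "finite Y" unfolding Y_def by (rule reindexX(2)[OF herm'])
  have bl: "bounded_linear (\<lambda>x. (H - H') *v x)" by (simp add: linear_conv_bounded_linear mv_linear)
  have eps0: "0 \<le> \<epsilon>" unfolding \<epsilon>_def opnorm2_def by (rule onorm_pos_le[OF bl])
  have sumP: "(\<Sum>x\<in>X. P x) = f"
    unfolding X_def P_def using reindexX(1)[OF herm, of "\<lambda>l. Pj H l f"] decomp[OF herm] by simp
  have sumP': "(\<Sum>y\<in>Y. P' y) = f"
    unfolding Y_def P'_def using reindexX(1)[OF herm', of "\<lambda>l. Pj H' l f"] decomp[OF herm'] by simp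
  have row: "\<forall>x\<in>X. (\<Sum>y\<in>Y. q x y) = pmf (power_spectrum H f) x"
  proof
    fix x assume x: "x \<in> X"
    have "(\<Sum>y\<in>Y. q x y) = Re (cinner (P x) (\<Sum>y\<in>Y. P' y))"
      by (simp add: q_def cinner_sum_right)
    also have "\<dots> = Re (cinner f (P x))" unfolding sumP' by (metis cnj.sel(1) cinner_commute)
    also have "\<dots> = pmf (power_spectrum H f) x"
      using x by (simp add: ps_pmf(1)[OF herm nf] P_def X_def Pj_self)
    finally show "(\<Sum>y\<in>Y. q x y) = pmf (power_spectrum H f) x" .
  qed
  have col: "\<forall>y\<in>Y. (\<Sum>x\<in>X. q x y) = pmf (power_spectrum H' f) y"
  proof
    fix y assume y: "y \<in> Y"
    have "(\<Sum>x\<in>X. q x y) = Re (cinner (\<Sum>x\<in>X. P x) (P' y))"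
      by (simp add: q_def cinner_sum_left)
    also have "\<dots> = Re (cinner f (P' y))" unfolding sumP ..
    also have "\<dots> = pmf (power_spectrum H' f) y"
      using y by (simp add: ps_pmf(1)[OF herm' nf] P'_def Y_def Pj_self)
    finally show "(\<Sum>x\<in>X. q x y) = pmf (power_spectrum H' f) y" .
  qed
  have W: "W1 (power_spectrum H f) (power_spectrum H' f) \<le> (\<Sum>x\<in>X. \<Sum>y\<in>Y. \<bar>q x y\<bar> * \<bar>x - y\<bar>)"
    by (rule W1_bound[OF finX finY _ _ row col])
       (simp_all add: X_def Y_def ps_pmf(2)[OF herm nf] ps_pmf(2)[OF herm' nf])
  have trm: "\<bar>q x y\<bar> * \<bar>x - y\<bar> \<le> \<epsilon> * (norm (P x) * norm (P' y))" if x: "x \<in> X" and y: "y \<in> Y" for x y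
  proof -
    define c where "c = cinner (P x) (P' y)"
    have PxE: "H *v P x = complex_of_real x *s P x" using Pj_in[of H "complex_of_real x" f]
      by (simp add: P_def eigenspace_def)
    have PyE: "H' *v P' y = complex_of_real y *s P' y" using Pj_in[of H' "complex_of_real y" f]
      by (simp add: P'_def eigenspace_def)
    have "cinner (P x) ((H - H') *v P' y) = cinner (P x) (H *v P' y) - cinner (P x) (H' *v P' y)"
      by (simp add: mv_diff_mat cinner_diff_right)
    also have "cinner (P x) (H *v P' y) = cinner (H *v P x) (P' y)" by (rule herm_swap[OF herm])
    also have "\<dots> = complex_of_real x * c" by (simp add: PxE cinner_scale_left c_def)
    also have "cinner (P x) (H' *v P' y) = complex_of_real y * c" by (simp add: PyE cinner_scale_right c_def)
    finally have eq: "cinner (P x) ((H - H') *v P' y) = complex_of_real (x - y) * c" by (simp add: algebra_simps)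
    have "\<bar>q x y\<bar> * \<bar>x - y\<bar> \<le> cmod c * \<bar>x - y\<bar>"
      unfolding q_def c_def by (rule mult_right_mono[OF abs_Re_le_cmod]) simp
    also have "\<dots> = cmod (cinner (P x) ((H - H') *v P' y))" by (simp add: eq norm_mult del: of_real_diff)
    also have "\<dots> \<le> norm (P x) * norm ((H - H') *v P' y)" by (rule cinner_cs)
    also have "\<dots> \<le> norm (P x) * (\<epsilon> * norm (P' y))"
      by (rule mult_left_mono) (simp_all add: \<epsilon>_def opnorm2_def onorm[OF bl])
    finally show ?thesis by (simp add: algebra_simps)
  qed
  have "(\<Sum>x\<in>X. \<Sum>y\<in>Y. \<bar>q x y\<bar> * \<bar>x - y\<bar>) \<le> (\<Sum>x\<in>X. \<Sum>y\<in>Y. \<epsilon> * (norm (P x) * norm (P' y)))"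
    by (intro sum_mono trm)
  also have "\<dots> = \<epsilon> * ((\<Sum>x\<in>X. norm (P x)) * (\<Sum>y\<in>Y. norm (P' y)))"
    by (subst sum_product) (simp add: sum_distrib_left)
  also have "(\<Sum>x\<in>X. norm (P x)) * (\<Sum>y\<in>Y. norm (P' y)) \<le> real CARD('n)"
  proof -
    let ?A = "\<Sum>x\<in>X. norm (P x)" and ?B = "\<Sum>y\<in>Y. norm (P' y)"
    have A2: "?A^2 \<le> real CARD('n)" unfolding X_def P_def by (rule sum_norm_bound[OF herm nf])
    have B2: "?B^2 \<le> real CARD('n)" unfolding Y_def P'_def by (rule sum_norm_bound[OF herm' nf])
    have A0: "0 \<le> ?A" and B0: "0 \<le> ?B" by (simp_all add: sum_nonneg)
    have "(?A * ?B)^2 \<le> (real CARD('n))^2"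
      unfolding power_mult_distrib power2_eq_square[of "real CARD('n)"]
      by (rule mult_mono[OF A2 B2]) simp_all
    then show ?thesis by (rule power2_le_imp_le) simp
  qed
  then have "\<epsilon> * ((\<Sum>x\<in>X. norm (P x)) * (\<Sum>y\<in>Y. norm (P' y))) \<le> \<epsilon> * real CARD('n)"
    by (rule mult_left_mono[OF _ eps0])
  finally show ?thesis using W by (simp add: \<epsilon>_def mult.commute)
qed


end
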